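(* Let $(S,\cdot)$ be a discrete semigroup, let $\mathcal{F}$ be a filter on $S$ such that $\overline{\mathcal{F}}$ is a subsemigroup of $\beta S$, let $(X,\langle T_s\rangle_{s\in S})$ be a dynamical system, and let $x\in X$. Then for each $F\in\mathcal{F}$ there is an $\mathcal{F}$-uniformly recurrent point $y\in\overline{\{T_s(x): s\in F\}}$ such that $x$ and $y$ are $\mathcal{F}$-proximal.
   Context: $\beta S$ is the Stone–Čech compactification of $S$ with its right topological semigroup structure; $\overline{\mathcal{F}}=\bigcap_{F\in\mathcal{F}}\overline{F}$ is the set of ultrafilters containing $\mathcal{F}$. A dynamical system $(X,\langle T_s\rangle_{s\in S})$: $X$ compact Hausdorff, each $T_s$ continuous, $T_s\circ T_t=T_{st}$. A set $A\subseteq S$ is $\mathcal{F}$-syndetic if for every $F\in\mathcal{F}$ there is a finite $G\subseteq F$ with $\bigcup_{t\in G}t^{-1}A\in\mathcal{F}$. A point $y$ is $\mathcal{F}$-uniformly recurrent if for every neighbourhood $U$ of $y$, $\{s\in S:T_s(y)\in U\}$ is $\mathcal{F}$-syndetic. Points $x,y$ are $\mathcal{F}$-proximal if for every neighbourhood $U$ of the diagonal in $X\times X$ and every $F\in\mathcal{F}$ there is $s\in F$ with $(T_s(x),T_s(y))\in U$. *)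

theory Defs
  imports "HOL-Analysis.Analysis"
begin

text \<open>Filters on S (the whole type 'a), represented as sets of subsets. Filters are proper.\<close>
definition is_filter :: "'a set set \<Rightarrow> bool" where
  "is_filter F \<longleftrightarrow> UNIV \<in> F \<and> {} \<notin> F \<and>
     (\<forall>A B. A \<in> F \<longrightarrow> B \<in> F \<longrightarrow> A \<inter> B \<in> F) \<and>
     (\<forall>A B. A \<in> F \<longrightarrow> A \<subseteq> B \<longrightarrow> B \<in> F)"

text \<open>Ultrafilters = points of the Stone-Cech compactification beta S.\<close>
definition is_ultrafilter :: "'a set set \<Rightarrow> bool" where
  "is_ultrafilter p \<longleftrightarrow> is_filter p \<and> (\<forall>A. A \<in> p \<or> - A \<in> p)"

definition lpre :: "'a::semigroup_mult \<Rightarrow> 'a set \<Rightarrow> 'a set" where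
  "lpre t A = {s. t * s \<in> A}"

text \<open>Product in beta S (right topological convention): A \<in> p q iff {x. x^{-1}A \<in> q} \<in> p.\<close>
definition ult_mult :: "'a::semigroup_mult set set \<Rightarrow> 'a set set \<Rightarrow> 'a set set" where
  "ult_mult p q = {A. {x. lpre x A \<in> q} \<in> p}"

text \<open>The closure of a filter in beta S: all ultrafilters containing it.\<close>
definition filter_closure :: "'a set set \<Rightarrow> 'a set set set" where
  "filter_closure F = {p. is_ultrafilter p \<and> F \<subseteq> p}"

definition subsemigroup_betaS :: "'a::semigroup_mult set set set \<Rightarrow> bool" where
  "subsemigroup_betaS P \<longleftrightarrow> (\<forall>p\<in>P. \<forall>q\<in>P. ult_mult p q \<in> P)"

definition dyn_system :: "('a::semigroup_mult \<Rightarrow> 'x::t2_space \<Rightarrow> 'x) \<Rightarrow> bool" where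
  "dyn_system T \<longleftrightarrow> compact (UNIV :: 'x set) \<and> (\<forall>s. continuous_on UNIV (T s)) \<and>
     (\<forall>s t. T s \<circ> T t = T (s * t))"

definition F_syndetic :: "'a::semigroup_mult set set \<Rightarrow> 'a set \<Rightarrow> bool" where
  "F_syndetic \<F> A \<longleftrightarrow> (\<forall>F\<in>\<F>. \<exists>G. finite G \<and> G \<subseteq> F \<and> (\<Union>t\<in>G. lpre t A) \<in> \<F>)"

definition F_unif_recurrent ::
  "'a::semigroup_mult set set \<Rightarrow> ('a \<Rightarrow> 'x::topological_space \<Rightarrow> 'x) \<Rightarrow> 'x \<Rightarrow> bool" where
  "F_unif_recurrent \<F> T y \<longleftrightarrow> (\<forall>U. open U \<and> y \<in> U \<longrightarrow> F_syndetic \<F> {s. T s y \<in> U})"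

text \<open>Neighbourhoods of the diagonal: sets containing an open set that contains the diagonal.\<close>
definition F_proximal ::
  "'a set set \<Rightarrow> ('a \<Rightarrow> 'x::topological_space \<Rightarrow> 'x) \<Rightarrow> 'x \<Rightarrow> 'x \<Rightarrow> bool" where
  "F_proximal \<F> T x y \<longleftrightarrow>
     (\<forall>U. (\<exists>V. open V \<and> (\<forall>z. (z, z) \<in> V) \<and> V \<subseteq> U) \<longrightarrow>
        (\<forall>F\<in>\<F>. \<exists>s\<in>F. (T s x, T s y) \<in> U))"

end

theory Submission
  imports Defs
begin


lemma filterD:
  assumes "is_filter F"
  shows "UNIV \<in> F" "{} \<notin> F" "A \<in> F \<Longrightarrow> B \<in> F \<Longrightarrow> A \<inter> B \<in> F"
    "A \<in> F \<Longrightarrow> A \<subseteq> B \<Longrightarrow> B \<in> F"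
  using assms unfolding is_filter_def by blast+

lemma uf_filter: "is_ultrafilter p \<Longrightarrow> is_filter p"
  unfolding is_ultrafilter_def by blast

lemma uf_compl: assumes "is_ultrafilter p" shows "(- A \<in> p) \<longleftrightarrow> (A \<notin> p)"
proof
  assume "- A \<in> p"
  show "A \<notin> p"
  proof
    assume "A \<in> p"
    then have "A \<inter> - A \<in> p" using filterD(3)[OF uf_filter[OF assms]] \<open>- A \<in> p\<close> by blast
    then show False using filterD(2)[OF uf_filter[OF assms]] by simp
  qed
next
  assume "A \<notin> p" then show "- A \<in> p" using assms unfolding is_ultrafilter_def by blast
qed

lemma uf_ne: "is_ultrafilter p \<Longrightarrow> A \<in> p \<Longrightarrow> A \<noteq> {}"
  using filterD(2)[OF uf_filter] by blast

lemma uf_Int: "is_ultrafilter p \<Longrightarrow> A \<in> p \<Longrightarrow> B \<in> p \<Longrightarrow> A \<inter> B \<in> p"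
  using filterD(3)[OF uf_filter] by blast

lemma uf_mono: "is_ultrafilter p \<Longrightarrow> A \<in> p \<Longrightarrow> A \<subseteq> B \<Longrightarrow> B \<in> p"
  using filterD(4)[OF uf_filter] by blast

lemma uf_Union_fin:
  assumes "finite V" "is_ultrafilter p" "\<forall>v\<in>V. v \<notin> p"
  shows "\<Union>V \<notin> p"
  using assms
proof (induction V rule: finite_induct)
  case empty then show ?case using filterD(2)[OF uf_filter] by simp
next
  case (insert v V)
  then have "- v \<in> p" "- \<Union>V \<in> p" using uf_compl by blast+
  then have "- v \<inter> - \<Union>V \<in> p" using uf_Int insert by blast
  then have "- \<Union>(insert v V) \<in> p" by (simp add: Int_commute)
  then show ?case using uf_compl insert by blast
qed

lemma uf_eq: "is_ultrafilter p \<Longrightarrow> is_filter q \<Longrightarrow> p \<subseteq> q \<Longrightarrow> p = q"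
proof -
  assume a: "is_ultrafilter p" "is_filter q" "p \<subseteq> q"
  { fix A assume "A \<in> q" "A \<notin> p"
    then have "- A \<in> q" using a uf_compl by blast
    then have "A \<inter> - A \<in> q" using filterD(3)[OF a(2)] \<open>A \<in> q\<close> by blast
    then have False using filterD(2)[OF a(2)] by simp }
  then show ?thesis using a by blast
qed

lemma ultrafilter_exists:
  assumes G: "is_filter G"
  shows "\<exists>p. is_ultrafilter p \<and> G \<subseteq> p"
proof -
  let ?A = "{H. is_filter H \<and> G \<subseteq> H}"
  have "\<forall>C\<in>chains ?A. \<exists>U\<in>?A. \<forall>X\<in>C. X \<subseteq> U"
  proof
    fix C assume C: "C \<in> chains ?A"
    show "\<exists>U\<in>?A. \<forall>X\<in>C. X \<subseteq> U"
    proof (cases "C = {}")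
      case True then show ?thesis using G by auto
    next
      case False
      have sub: "C \<subseteq> ?A" using C chainsD2 by blast
      have fC: "\<And>X. X \<in> C \<Longrightarrow> is_filter X" using sub by blast
      have GC: "\<And>X. X \<in> C \<Longrightarrow> G \<subseteq> X" using sub by blast
      obtain X0 where X0: "X0 \<in> C" using False by blast
      have "is_filter (\<Union>C)"
        unfolding is_filter_def
      proof (intro conjI allI impI)
        show "UNIV \<in> \<Union>C" using X0 filterD(1)[OF fC[OF X0]] by blast
        show "{} \<notin> \<Union>C"
        proof
          assume "{} \<in> \<Union>C"
          then obtain X where "X \<in> C" "{} \<in> X" by blast
          then show False using filterD(2)[OF fC] by blast
        qed
        fix A B
        show "A \<in> \<Union>C \<Longrightarrow> B \<in> \<Union>C \<Longrightarrow> A \<inter> B \<in> \<Union>C"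
        proof -
          assume "A \<in> \<Union>C" "B \<in> \<Union>C"
          then obtain X Y where XY: "X \<in> C" "Y \<in> C" "A \<in> X" "B \<in> Y" by blast
          then have "X \<subseteq> Y \<or> Y \<subseteq> X" using chainsD[OF C] by blast
          then show ?thesis
          proof
            assume "X \<subseteq> Y"
            then have "A \<inter> B \<in> Y" using XY filterD(3)[OF fC[OF XY(2)]] by blast
            then show ?thesis using XY by blast
          next
            assume "Y \<subseteq> X"
            then have "A \<inter> B \<in> X" using XY filterD(3)[OF fC[OF XY(1)]] by blast
            then show ?thesis using XY by blast
          qed
        qed
        show "A \<in> \<Union>C \<Longrightarrow> A \<subseteq> B \<Longrightarrow> B \<in> \<Union>C"
        proof -
          assume "A \<in> \<Union>C" "A \<subseteq> B"
          then obtain X where "X \<in> C" "A \<in> X" by blast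
          then have "B \<in> X" using filterD(4)[OF fC[OF \<open>X \<in> C\<close>]] \<open>A \<subseteq> B\<close> by blast
          then show ?thesis using \<open>X \<in> C\<close> by blast
        qed
      qed
      moreover have "G \<subseteq> \<Union>C" using GC X0 by blast
      ultimately show ?thesis by blast
    qed
  qed
  from Zorn_Lemma2[OF this] obtain M where M: "M \<in> ?A" and max: "\<forall>X\<in>?A. M \<subseteq> X \<longrightarrow> X = M"
    by blast
  have fM: "is_filter M" using M by blast
  have GM: "G \<subseteq> M" using M by blast
  have "\<forall>A. A \<in> M \<or> - A \<in> M"
  proof (rule ccontr)
    assume "\<not> ?thesis"
    then obtain A where nA: "A \<notin> M" "- A \<notin> M" by blast
    show False
    proof (cases "\<exists>h\<in>M. h \<inter> A = {}")
      case True
      then obtain h where "h \<in> M" "h \<subseteq> - A" by blast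
      then have "- A \<in> M" using filterD(4)[OF fM] by blast
      then show False using nA by blast
    next
      case False
      let ?H = "{B. \<exists>h\<in>M. h \<inter> A \<subseteq> B}"
      have "is_filter ?H"
        unfolding is_filter_def
      proof (intro conjI allI impI)
        show "UNIV \<in> ?H" using filterD(1)[OF fM] by blast
        show "{} \<notin> ?H" using False by blast
        fix B1 B2
        show "B1 \<in> ?H \<Longrightarrow> B2 \<in> ?H \<Longrightarrow> B1 \<inter> B2 \<in> ?H"
        proof -
          assume "B1 \<in> ?H" "B2 \<in> ?H"
          then obtain h1 h2 where h: "h1 \<in> M" "h2 \<in> M" "h1 \<inter> A \<subseteq> B1" "h2 \<inter> A \<subseteq> B2" by blast
          then have "h1 \<inter> h2 \<in> M" using filterD(3)[OF fM] by blast
          moreover have "(h1 \<inter> h2) \<inter> A \<subseteq> B1 \<inter> B2" using h by blast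
          ultimately show ?thesis by blast
        qed
        show "B1 \<in> ?H \<Longrightarrow> B1 \<subseteq> B2 \<Longrightarrow> B2 \<in> ?H" by blast
      qed
      moreover have "M \<subseteq> ?H" by blast
      moreover have "A \<in> ?H" using filterD(1)[OF fM] by blast
      ultimately have "?H \<in> ?A" "M \<subseteq> ?H" using GM by blast+
      then have "?H = M" using max by blast
      then show False using \<open>A \<in> ?H\<close> nA by blast
    qed
  qed
  then show ?thesis using fM GM unfolding is_ultrafilter_def by blast
qed

lemma ultrafilter_extend:
  assumes F: "is_filter \<F>" and Bne: "\<B> \<noteq> {}"
    and dir: "\<forall>B1\<in>\<B>. \<forall>B2\<in>\<B>. \<exists>B3\<in>\<B>. B3 \<subseteq> B1 \<inter> B2"
    and meet: "\<forall>F\<in>\<F>. \<forall>B\<in>\<B>. F \<inter> B \<noteq> {}"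
  shows "\<exists>q. is_ultrafilter q \<and> \<F> \<subseteq> q \<and> \<B> \<subseteq> q"
proof -
  define H where "H = {A. \<exists>F\<in>\<F>. \<exists>B\<in>\<B>. F \<inter> B \<subseteq> A}"
  obtain B0 where B0: "B0 \<in> \<B>" using Bne by blast
  have U: "UNIV \<in> \<F>" using filterD(1)[OF F] .
  have "is_filter H"
    unfolding is_filter_def
  proof (intro conjI allI impI)
    show "UNIV \<in> H" unfolding H_def using U B0 by blast
    show "{} \<notin> H" unfolding H_def using meet by blast
    fix A1 A2
    show "A1 \<in> H \<Longrightarrow> A2 \<in> H \<Longrightarrow> A1 \<inter> A2 \<in> H"
    proof -
      assume "A1 \<in> H" "A2 \<in> H"
      then obtain F1 F2 B1 B2 where h: "F1 \<in> \<F>" "F2 \<in> \<F>" "B1 \<in> \<B>" "B2 \<in> \<B>"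
        "F1 \<inter> B1 \<subseteq> A1" "F2 \<inter> B2 \<subseteq> A2" unfolding H_def by blast
      obtain B3 where B3: "B3 \<in> \<B>" "B3 \<subseteq> B1 \<inter> B2" using dir h(3,4) by blast
      have F12: "F1 \<inter> F2 \<in> \<F>" using filterD(3)[OF F h(1,2)] .
      have "(F1 \<inter> F2) \<inter> B3 \<subseteq> A1 \<inter> A2" using h(5,6) B3(2) by blast
      then show ?thesis unfolding H_def using F12 B3(1) by blast
    qed
    show "A1 \<in> H \<Longrightarrow> A1 \<subseteq> A2 \<Longrightarrow> A2 \<in> H" unfolding H_def by blast
  qed
  then obtain q where q: "is_ultrafilter q" "H \<subseteq> q" using ultrafilter_exists by blast
  have "\<F> \<subseteq> H" unfolding H_def using B0 by blast
  moreover have "\<B> \<subseteq> H" unfolding H_def using U by blast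
  ultimately show ?thesis using q by blast
qed




definition uclosed :: "'a set set set \<Rightarrow> bool" where
  "uclosed C \<longleftrightarrow> (\<forall>c\<in>C. is_ultrafilter c) \<and>
     (\<forall>r. is_ultrafilter r \<and> (\<forall>A\<in>r. \<exists>c\<in>C. A \<in> c) \<longrightarrow> r \<in> C)"

lemma uclosed_hat: "uclosed {c. is_ultrafilter c \<and> \<B> \<subseteq> c}"
  unfolding uclosed_def
proof (intro conjI allI impI ballI)
  fix r assume r: "is_ultrafilter r \<and> (\<forall>A\<in>r. \<exists>c\<in>{c. is_ultrafilter c \<and> \<B> \<subseteq> c}. A \<in> c)"
  have "\<B> \<subseteq> r"
  proof
    fix B assume B: "B \<in> \<B>"
    show "B \<in> r"
    proof (rule ccontr)
      assume "B \<notin> r"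
      then have "- B \<in> r" using uf_compl r by blast
      then obtain c where c: "is_ultrafilter c" "\<B> \<subseteq> c" "- B \<in> c" using r by blast
      then show False using uf_compl[OF c(1)] B by blast
    qed
  qed
  then show "r \<in> {c. is_ultrafilter c \<and> \<B> \<subseteq> c}" using r by blast
qed auto

lemma uclosed_Inter:
  assumes "\<C> \<noteq> {}" "\<forall>C\<in>\<C>. uclosed C"
  shows "uclosed (\<Inter>\<C>)"
  unfolding uclosed_def
proof (intro conjI allI impI ballI)
  fix c assume "c \<in> \<Inter>\<C>"
  then show "is_ultrafilter c" using assms unfolding uclosed_def by blast
next
  fix r assume r: "is_ultrafilter r \<and> (\<forall>A\<in>r. \<exists>c\<in>\<Inter>\<C>. A \<in> c)"
  show "r \<in> \<Inter>\<C>"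
  proof
    fix C assume C: "C \<in> \<C>"
    have "\<forall>A\<in>r. \<exists>c\<in>C. A \<in> c" using r C by blast
    then show "r \<in> C" using assms(2) C r unfolding uclosed_def by blast
  qed
qed

lemma uclosed_directed:
  assumes ne: "\<K> \<noteq> {}" and cl: "\<forall>K\<in>\<K>. uclosed K \<and> K \<noteq> {}"
    and dir: "\<forall>K1\<in>\<K>. \<forall>K2\<in>\<K>. \<exists>K3\<in>\<K>. K3 \<subseteq> K1 \<inter> K2"
  shows "\<Inter>\<K> \<noteq> {}"
proof -
  define G where "G = {E. \<exists>K\<in>\<K>. \<forall>c\<in>K. E \<in> c}"
  have ufK: "\<And>K c. K \<in> \<K> \<Longrightarrow> c \<in> K \<Longrightarrow> is_ultrafilter c"
    using cl unfolding uclosed_def by blast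
  obtain K0 where K0: "K0 \<in> \<K>" using ne by blast
  have "is_filter G"
    unfolding is_filter_def
  proof (intro conjI allI impI)
    have "\<forall>c\<in>K0. UNIV \<in> c" using ufK[OF K0] filterD(1)[OF uf_filter] by blast
    then show "UNIV \<in> G" unfolding G_def using K0 by blast
    show "{} \<notin> G"
    proof
      assume "{} \<in> G"
      then obtain K where K: "K \<in> \<K>" "\<forall>c\<in>K. {} \<in> c" unfolding G_def by blast
      then obtain c where "c \<in> K" using cl by blast
      then show False using K uf_ne[OF ufK[OF K(1) \<open>c \<in> K\<close>]] by blast
    qed
    fix A B
    show "A \<in> G \<Longrightarrow> B \<in> G \<Longrightarrow> A \<inter> B \<in> G"
    proof -
      assume "A \<in> G" "B \<in> G"
      then obtain K1 K2 where K: "K1 \<in> \<K>" "K2 \<in> \<K>" "\<forall>c\<in>K1. A \<in> c" "\<forall>c\<in>K2. B \<in> c"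
        unfolding G_def by blast
      obtain K3 where K3: "K3 \<in> \<K>" "K3 \<subseteq> K1 \<inter> K2" using dir K(1,2) by blast
      have "\<forall>c\<in>K3. A \<inter> B \<in> c"
      proof
        fix c assume "c \<in> K3"
        then have "A \<in> c" "B \<in> c" using K K3 by blast+
        then show "A \<inter> B \<in> c" using uf_Int[OF ufK[OF K3(1) \<open>c \<in> K3\<close>]] by blast
      qed
      then show ?thesis unfolding G_def using K3 by blast
    qed
    show "A \<in> G \<Longrightarrow> A \<subseteq> B \<Longrightarrow> B \<in> G"
    proof -
      assume "A \<in> G" "A \<subseteq> B"
      then obtain K where K: "K \<in> \<K>" "\<forall>c\<in>K. A \<in> c" unfolding G_def by blast
      have "\<forall>c\<in>K. B \<in> c"
      proof
        fix c assume "c \<in> K"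
        then show "B \<in> c" using K uf_mono[OF ufK[OF K(1) \<open>c \<in> K\<close>]] \<open>A \<subseteq> B\<close> by blast
      qed
      then show ?thesis unfolding G_def using K by blast
    qed
  qed
  then obtain r where r: "is_ultrafilter r" "G \<subseteq> r" using ultrafilter_exists by blast
  have "r \<in> K" if K: "K \<in> \<K>" for K
  proof -
    have "\<forall>A\<in>r. \<exists>c\<in>K. A \<in> c"
    proof (rule ballI, rule ccontr)
      fix A assume A: "A \<in> r" "\<not> (\<exists>c\<in>K. A \<in> c)"
      have "\<forall>c\<in>K. - A \<in> c"
      proof
        fix c assume "c \<in> K"
        then show "- A \<in> c" using A(2) uf_compl[OF ufK[OF K \<open>c \<in> K\<close>]] by blast
      qed
      then have "- A \<in> G" unfolding G_def using K by blast
      then have "- A \<in> r" using r by blast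
      then show False using A(1) uf_compl[OF r(1)] by blast
    qed
    then show ?thesis using cl K r(1) unfolding uclosed_def by blast
  qed
  then show ?thesis by blast
qed

lemma zorn_min:
  assumes ne: "\<A> \<noteq> {}"
    and ch: "\<And>\<C>. \<C> \<noteq> {} \<Longrightarrow> \<C> \<subseteq> \<A> \<Longrightarrow> chain\<^sub>\<subseteq> \<C> \<Longrightarrow> \<Inter>\<C> \<in> \<A>"
  shows "\<exists>M\<in>\<A>. \<forall>X\<in>\<A>. X \<subseteq> M \<longrightarrow> X = M"
proof -
  define A' where "A' = uminus ` \<A>"
  have "\<forall>C\<in>chains A'. \<exists>U\<in>A'. \<forall>X\<in>C. X \<subseteq> U"
  proof
    fix C assume C: "C \<in> chains A'"
    show "\<exists>U\<in>A'. \<forall>X\<in>C. X \<subseteq> U"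
    proof (cases "C = {}")
      case True
      obtain a where "a \<in> \<A>" using ne by blast
      then have "- a \<in> A'" unfolding A'_def by blast
      then show ?thesis using True by blast
    next
      case False
      have sub: "C \<subseteq> A'" using C chainsD2 by blast
      define D where "D = uminus ` C"
      have "D \<subseteq> \<A>"
      proof
        fix Y assume "Y \<in> D"
        then obtain X where X: "X \<in> C" "Y = - X" unfolding D_def by blast
        then obtain Z where "Z \<in> \<A>" "X = - Z" using sub unfolding A'_def by blast
        then show "Y \<in> \<A>" using X by simp
      qed
      moreover have "chain\<^sub>\<subseteq> D"
        unfolding chain_subset_def D_def
      proof (intro ballI)
        fix Y1 Y2 assume "Y1 \<in> uminus ` C" "Y2 \<in> uminus ` C"
        then obtain X1 X2 where "X1 \<in> C" "X2 \<in> C" "Y1 = - X1" "Y2 = - X2" by blast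
        moreover have "X1 \<subseteq> X2 \<or> X2 \<subseteq> X1" using chainsD[OF C] calculation(1,2) .
        ultimately show "Y1 \<subseteq> Y2 \<or> Y2 \<subseteq> Y1" by auto
      qed
      moreover have "D \<noteq> {}" using False unfolding D_def by blast
      ultimately have "\<Inter>D \<in> \<A>" using ch by blast
      then have "- \<Inter>D \<in> A'" unfolding A'_def by blast
      moreover have "\<forall>X\<in>C. X \<subseteq> - \<Inter>D"
      proof
        fix X assume "X \<in> C"
        then have "- X \<in> D" unfolding D_def by blast
        then have "\<Inter>D \<subseteq> - X" by (rule Inter_lower)
        then show "X \<subseteq> - \<Inter>D" by blast
      qed
      ultimately show ?thesis by blast
    qed
  qed
  from Zorn_Lemma2[OF this] obtain M' where M': "M' \<in> A'" "\<forall>X\<in>A'. M' \<subseteq> X \<longrightarrow> X = M'"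
    by blast
  obtain M where M: "M \<in> \<A>" "M' = - M" using M'(1) unfolding A'_def by blast
  have "\<forall>X\<in>\<A>. X \<subseteq> M \<longrightarrow> X = M"
  proof (intro ballI impI)
    fix X assume "X \<in> \<A>" "X \<subseteq> M"
    then have "- X \<in> A'" "M' \<subseteq> - X" using M(2) unfolding A'_def by auto
    then have "- X = M'" using M'(2) by blast
    then show "X = M" using M(2) by auto
  qed
  then show ?thesis using M(1) by blast
qed

lemma chain_directed: "chain\<^sub>\<subseteq> \<C> \<Longrightarrow> \<forall>K1\<in>\<C>. \<forall>K2\<in>\<C>. \<exists>K3\<in>\<C>. K3 \<subseteq> K1 \<inter> K2"
  unfolding chain_subset_def by (metis Int_absorb1 Int_absorb2 order_refl)

lemma ult_mult_assoc:
  "ult_mult (ult_mult p q) r = ult_mult p (ult_mult q r)"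
proof -
  have e1: "lpre s {x. lpre x A \<in> r} = {y. lpre (s * y) A \<in> r}" for s A
    unfolding lpre_def by simp
  have e2: "lpre y (lpre s A) = lpre (s * y) A" for s y A
    unfolding lpre_def by (simp add: mult.assoc)
  show ?thesis unfolding ult_mult_def by (simp add: e1 e2)
qed




locale bsetting =
  fixes FF :: "'a::semigroup_mult set set"
  assumes filt: "is_filter FF" and semi: "subsemigroup_betaS (filter_closure FF)"
begin

abbreviation "PP \<equiv> filter_closure FF"

lemma P_mult: "p \<in> PP \<Longrightarrow> q \<in> PP \<Longrightarrow> ult_mult p q \<in> PP"
  using semi unfolding subsemigroup_betaS_def by blast

lemma P_uf: "p \<in> PP \<Longrightarrow> is_ultrafilter p"
  unfolding filter_closure_def by blast

lemma P_FF: "p \<in> PP \<Longrightarrow> FF \<subseteq> p"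
  unfolding filter_closure_def by blast

lemma P_closed: "uclosed PP"
  unfolding filter_closure_def by (rule uclosed_hat)

lemma P_ne: "PP \<noteq> {}"
  using ultrafilter_exists[OF filt] unfolding filter_closure_def by blast

lemma mult_mem: "A \<in> ult_mult q a \<longleftrightarrow> {x. lpre x A \<in> a} \<in> q"
  unfolding ult_mult_def by simp

lemma closed_mult:
  assumes C: "uclosed C" "C \<subseteq> PP" and a: "a \<in> PP"
  shows "uclosed ((\<lambda>q. ult_mult q a) ` C)"
  unfolding uclosed_def
proof (intro conjI allI impI ballI)
  fix c assume "c \<in> (\<lambda>q. ult_mult q a) ` C"
  then obtain q where q: "q \<in> C" "c = ult_mult q a" by blast
  then have "q \<in> PP" using C(2) by blast
  then have "c \<in> PP" using P_mult[OF _ a] q(2) by blast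
  then show "is_ultrafilter c" by (rule P_uf)
next
  fix r assume r: "is_ultrafilter r \<and> (\<forall>A\<in>r. \<exists>c\<in>(\<lambda>q. ult_mult q a) ` C. A \<in> c)"
  have ra: "is_ultrafilter r" using r by blast
  have ufa: "is_ultrafilter a" using P_uf[OF a] .
  define BA where "BA A = {x. lpre x A \<in> a}" for A
  define K where "K A = C \<inter> {c. is_ultrafilter c \<and> {BA A} \<subseteq> c}" for A
  have Kcl: "\<forall>k\<in>K ` r. uclosed k \<and> k \<noteq> {}"
  proof
    fix k assume "k \<in> K ` r"
    then obtain A where A: "A \<in> r" "k = K A" by blast
    have "uclosed (\<Inter>{C, {c. is_ultrafilter c \<and> {BA A} \<subseteq> c}})"
    proof (rule uclosed_Inter)
      have h: "uclosed {c. is_ultrafilter c \<and> {BA A} \<subseteq> c}" by (rule uclosed_hat)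
      show "\<forall>C'\<in>{C, {c. is_ultrafilter c \<and> {BA A} \<subseteq> c}}. uclosed C'" using h C(1) by blast
    qed simp
    then have "uclosed k" unfolding A(2) K_def by simp
    moreover
    obtain c where c: "c \<in> C" "A \<in> ult_mult c a" using r A(1) by blast
    then have "BA A \<in> c" unfolding BA_def using mult_mem by blast
    moreover have "is_ultrafilter c" using c(1) C(2) P_uf by blast
    ultimately have "c \<in> k" "uclosed k" unfolding A(2) K_def using c(1) by blast+
    then show "uclosed k \<and> k \<noteq> {}" by blast
  qed
  have BAmono: "BA A1 \<subseteq> BA A2" if "A1 \<subseteq> A2" for A1 A2
  proof
    fix x assume "x \<in> BA A1"
    then have "lpre x A1 \<in> a" unfolding BA_def by blast
    moreover have "lpre x A1 \<subseteq> lpre x A2" using that unfolding lpre_def by blast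
    ultimately have "lpre x A2 \<in> a" using uf_mono[OF ufa] by blast
    then show "x \<in> BA A2" unfolding BA_def by blast
  qed
  have Kmono: "K A1 \<subseteq> K A2" if "A1 \<subseteq> A2" for A1 A2
  proof
    fix c assume "c \<in> K A1"
    then have c: "c \<in> C" "is_ultrafilter c" "BA A1 \<in> c" unfolding K_def by blast+
    then have "BA A2 \<in> c" using uf_mono[OF c(2) c(3) BAmono[OF that]] by blast
    then show "c \<in> K A2" unfolding K_def using c by blast
  qed
  have dir: "\<forall>K1\<in>K ` r. \<forall>K2\<in>K ` r. \<exists>K3\<in>K ` r. K3 \<subseteq> K1 \<inter> K2"
  proof (intro ballI)
    fix K1 K2 assume "K1 \<in> K ` r" "K2 \<in> K ` r"
    then obtain A1 A2 where A: "A1 \<in> r" "A2 \<in> r" "K1 = K A1" "K2 = K A2" by blast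
    have "A1 \<inter> A2 \<in> r" using uf_Int[OF ra A(1,2)] .
    moreover have "K (A1 \<inter> A2) \<subseteq> K A1" "K (A1 \<inter> A2) \<subseteq> K A2"
      by (rule Kmono; blast)+
    then have "K (A1 \<inter> A2) \<subseteq> K1 \<inter> K2" using A(3,4) by blast
    ultimately show "\<exists>K3\<in>K ` r. K3 \<subseteq> K1 \<inter> K2" by blast
  qed
  have Ur: "UNIV \<in> r" using filterD(1)[OF uf_filter[OF ra]] .
  then have "K ` r \<noteq> {}" by blast
  then have "\<Inter>(K ` r) \<noteq> {}" by (rule uclosed_directed[OF _ Kcl dir])
  then obtain q where q: "q \<in> \<Inter>(K ` r)" by blast
  then have "q \<in> K UNIV" using Ur by blast
  then have qC: "q \<in> C" unfolding K_def by blast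
  have "r \<subseteq> ult_mult q a"
  proof
    fix A assume "A \<in> r"
    then have "q \<in> K A" using q by blast
    then have "BA A \<in> q" unfolding K_def by blast
    then show "A \<in> ult_mult q a" unfolding BA_def using mult_mem by blast
  qed
  moreover have "ult_mult q a \<in> PP" using P_mult[OF _ a] qC C(2) by blast
  ultimately have "r = ult_mult q a" using uf_eq[OF ra uf_filter[OF P_uf]] by simp
  then show "r \<in> (\<lambda>q. ult_mult q a) ` C" using qC by blast
qed


lemma Inter_chain_ne:
  assumes "\<C> \<noteq> {}" "\<forall>C\<in>\<C>. uclosed C \<and> C \<noteq> {}" "chain\<^sub>\<subseteq> \<C>"
  shows "\<Inter>\<C> \<noteq> {}"
  by (rule uclosed_directed[OF assms(1,2) chain_directed[OF assms(3)]])

lemma ellis: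
  assumes M0: "M0 \<subseteq> PP" "M0 \<noteq> {}" "uclosed M0" "\<forall>p\<in>M0. \<forall>q\<in>M0. ult_mult p q \<in> M0"
  shows "\<exists>p\<in>M0. ult_mult p p = p"
proof -
  define isS where "isS M \<longleftrightarrow> M \<subseteq> M0 \<and> M \<noteq> {} \<and> uclosed M \<and> (\<forall>p\<in>M. \<forall>q\<in>M. ult_mult p q \<in> M)" for M
  have "\<exists>M\<in>Collect isS. \<forall>X\<in>Collect isS. X \<subseteq> M \<longrightarrow> X = M"
  proof (rule zorn_min)
    show "Collect isS \<noteq> {}" using M0 unfolding isS_def by blast
  next
    fix \<C> assume C: "\<C> \<noteq> {}" "\<C> \<subseteq> Collect isS" "chain\<^sub>\<subseteq> \<C>"
    have cl: "\<forall>C\<in>\<C>. uclosed C \<and> C \<noteq> {}" using C(2) unfolding isS_def by blast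
    have "\<Inter>\<C> \<noteq> {}" by (rule Inter_chain_ne[OF C(1) cl C(3)])
    moreover have "uclosed (\<Inter>\<C>)" using uclosed_Inter[OF C(1)] cl by blast
    moreover have "\<Inter>\<C> \<subseteq> M0" using C(1,2) unfolding isS_def by blast
    moreover have "\<forall>p\<in>\<Inter>\<C>. \<forall>q\<in>\<Inter>\<C>. ult_mult p q \<in> \<Inter>\<C>"
      using C(2) unfolding isS_def by blast
    ultimately show "\<Inter>\<C> \<in> Collect isS" unfolding isS_def by blast
  qed
  then obtain M where M: "isS M" and Mmin: "\<And>X. isS X \<Longrightarrow> X \<subseteq> M \<Longrightarrow> X = M" by blast
  have MP: "M \<subseteq> PP" using M M0(1) unfolding isS_def by blast
  have Mcl: "uclosed M" using M unfolding isS_def by blast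
  have Msg: "\<And>p q. p \<in> M \<Longrightarrow> q \<in> M \<Longrightarrow> ult_mult p q \<in> M" using M unfolding isS_def by blast
  obtain p where p: "p \<in> M" using M unfolding isS_def by blast
  have pP: "p \<in> PP" using p MP by blast
  define Mp where "Mp = (\<lambda>q. ult_mult q p) ` M"
  have MpM: "Mp \<subseteq> M" unfolding Mp_def using Msg p by blast
  have "isS Mp"
    unfolding isS_def
  proof (intro conjI)
    show "Mp \<subseteq> M0" using MpM M unfolding isS_def by blast
    show "Mp \<noteq> {}" unfolding Mp_def using p by blast
    show "uclosed Mp" unfolding Mp_def by (rule closed_mult[OF Mcl MP pP])
    show "\<forall>x\<in>Mp. \<forall>y\<in>Mp. ult_mult x y \<in> Mp"
    proof (intro ballI)
      fix x y assume "x \<in> Mp" "y \<in> Mp"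
      then obtain q1 q2 where q: "q1 \<in> M" "q2 \<in> M" "x = ult_mult q1 p" "y = ult_mult q2 p"
        unfolding Mp_def by blast
      have "ult_mult x y = ult_mult (ult_mult (ult_mult q1 p) q2) p"
        unfolding q(3,4) by (simp add: ult_mult_assoc)
      moreover have "ult_mult (ult_mult q1 p) q2 \<in> M" using Msg[OF Msg[OF q(1) p] q(2)] .
      ultimately show "ult_mult x y \<in> Mp" unfolding Mp_def by blast
    qed
  qed
  then have "Mp = M" using Mmin MpM by blast
  then have "p \<in> Mp" using p by simp
  then obtain q0 where q0: "q0 \<in> M" "p = ult_mult q0 p" unfolding Mp_def by blast
  define E where "E = {q \<in> M. ult_mult q p = p}"
  have "isS E"
    unfolding isS_def
  proof (intro conjI)
    show "E \<subseteq> M0" using M unfolding isS_def E_def by blast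
    show "E \<noteq> {}" unfolding E_def using q0 by force
    show "\<forall>x\<in>E. \<forall>y\<in>E. ult_mult x y \<in> E"
    proof (intro ballI)
      fix x y assume "x \<in> E" "y \<in> E"
      then have xy: "x \<in> M" "y \<in> M" "ult_mult x p = p" "ult_mult y p = p" unfolding E_def by blast+
      have "ult_mult (ult_mult x y) p = p" by (simp add: ult_mult_assoc xy(3,4))
      then show "ult_mult x y \<in> E" unfolding E_def using Msg[OF xy(1,2)] by blast
    qed
    show "uclosed E"
      unfolding uclosed_def
    proof (intro conjI allI impI ballI)
      fix c assume "c \<in> E" then show "is_ultrafilter c" using MP P_uf unfolding E_def by blast
    next
      fix r assume r: "is_ultrafilter r \<and> (\<forall>A\<in>r. \<exists>c\<in>E. A \<in> c)"
      have ra: "is_ultrafilter r" using r by blast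
      have "\<forall>A\<in>r. \<exists>c\<in>M. A \<in> c" using r unfolding E_def by blast
      then have rM: "r \<in> M" using Mcl ra unfolding uclosed_def by blast
      have "p \<subseteq> ult_mult r p"
      proof
        fix A assume A: "A \<in> p"
        define B where "B = {x. lpre x A \<in> p}"
        show "A \<in> ult_mult r p"
        proof (rule ccontr)
          assume "A \<notin> ult_mult r p"
          then have "B \<notin> r" unfolding B_def using mult_mem by blast
          then have "- B \<in> r" using uf_compl[OF ra] by blast
          then obtain c where c: "c \<in> E" "- B \<in> c" using r by blast
          then have cp: "ult_mult c p = p" "c \<in> M" unfolding E_def by blast+
          then have "A \<in> ult_mult c p" using A by simp
          then have "B \<in> c" unfolding B_def using mult_mem by blast
          moreover have "is_ultrafilter c" using cp(2) MP P_uf by blast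
          ultimately show False using c(2) uf_compl by blast
        qed
      qed
      moreover have "ult_mult r p \<in> PP" using P_mult[OF _ pP] rM MP by blast
      ultimately have "p = ult_mult r p" using uf_eq[OF P_uf[OF pP] uf_filter[OF P_uf]] by simp
      then show "r \<in> E" unfolding E_def using rM by simp
    qed
  qed
  moreover have "E \<subseteq> M" unfolding E_def by blast
  ultimately have "E = M" using Mmin by blast
  then have "p \<in> E" using p by blast
  then show ?thesis unfolding E_def using p M unfolding isS_def by blast
qed

lemma key:
  "\<exists>p\<in>PP. ult_mult p p = p \<and> (\<forall>q\<in>PP. \<exists>r\<in>PP. ult_mult r (ult_mult q p) = p)"
proof -
  define isL where "isL L \<longleftrightarrow> L \<subseteq> PP \<and> L \<noteq> {} \<and> uclosed L \<and> (\<forall>q\<in>PP. \<forall>l\<in>L. ult_mult q l \<in> L)" for L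
  have "\<exists>L\<in>Collect isL. \<forall>X\<in>Collect isL. X \<subseteq> L \<longrightarrow> X = L"
  proof (rule zorn_min)
    have "isL PP" unfolding isL_def using P_ne P_closed P_mult by blast
    then show "Collect isL \<noteq> {}" by blast
  next
    fix \<C> assume C: "\<C> \<noteq> {}" "\<C> \<subseteq> Collect isL" "chain\<^sub>\<subseteq> \<C>"
    have cl: "\<forall>C\<in>\<C>. uclosed C \<and> C \<noteq> {}" using C(2) unfolding isL_def by blast
    have "\<Inter>\<C> \<noteq> {}" by (rule Inter_chain_ne[OF C(1) cl C(3)])
    moreover have "uclosed (\<Inter>\<C>)" using uclosed_Inter[OF C(1)] cl by blast
    moreover have "\<Inter>\<C> \<subseteq> PP" using C(1,2) unfolding isL_def by blast
    moreover have "\<forall>q\<in>PP. \<forall>l\<in>\<Inter>\<C>. ult_mult q l \<in> \<Inter>\<C>"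
      using C(2) unfolding isL_def by blast
    ultimately show "\<Inter>\<C> \<in> Collect isL" unfolding isL_def by blast
  qed
  then obtain L where L: "isL L" and Lmin: "\<And>X. isL X \<Longrightarrow> X \<subseteq> L \<Longrightarrow> X = L" by blast
  have LP: "L \<subseteq> PP" and Lid: "\<And>q l. q \<in> PP \<Longrightarrow> l \<in> L \<Longrightarrow> ult_mult q l \<in> L"
    using L unfolding isL_def by blast+
  have "\<exists>p\<in>L. ult_mult p p = p"
  proof (rule ellis)
    show "L \<subseteq> PP" "L \<noteq> {}" "uclosed L" using L unfolding isL_def by blast+
    show "\<forall>p\<in>L. \<forall>q\<in>L. ult_mult p q \<in> L" using Lid LP by blast
  qed
  then obtain p where p: "p \<in> L" "ult_mult p p = p" by blast
  have pP: "p \<in> PP" using p LP by blast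
  have "\<exists>r\<in>PP. ult_mult r (ult_mult q p) = p" if q: "q \<in> PP" for q
  proof -
    define l where "l = ult_mult q p"
    have lL: "l \<in> L" unfolding l_def using Lid[OF q p(1)] .
    have lP: "l \<in> PP" using lL LP by blast
    define J where "J = (\<lambda>r. ult_mult r l) ` PP"
    have "isL J"
      unfolding isL_def
    proof (intro conjI)
      show "J \<subseteq> PP" unfolding J_def using P_mult[OF _ lP] by blast
      show "J \<noteq> {}" unfolding J_def using P_ne by blast
      show "uclosed J" unfolding J_def by (rule closed_mult[OF P_closed order_refl lP])
      show "\<forall>q'\<in>PP. \<forall>j\<in>J. ult_mult q' j \<in> J"
      proof (intro ballI)
        fix q' j assume "q' \<in> PP" "j \<in> J"
        then obtain r where r: "r \<in> PP" "j = ult_mult r l" unfolding J_def by blast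
        have "ult_mult q' j = ult_mult (ult_mult q' r) l" unfolding r(2) by (simp add: ult_mult_assoc)
        moreover have "ult_mult q' r \<in> PP" using P_mult[OF \<open>q' \<in> PP\<close> r(1)] .
        ultimately show "ult_mult q' j \<in> J" unfolding J_def by blast
      qed
    qed
    moreover have "J \<subseteq> L" unfolding J_def using Lid[OF _ lL] by blast
    ultimately have "J = L" using Lmin by blast
    then have "p \<in> J" using p(1) by blast
    then show ?thesis unfolding J_def l_def by blast
  qed
  then show ?thesis using pP p(2) by blast
qed

end



definition ulim :: "'a set set \<Rightarrow> ('a \<Rightarrow> 'x::topological_space) \<Rightarrow> 'x" where
  "ulim p f = (THE z. \<forall>U. open U \<and> z \<in> U \<longrightarrow> {s. f s \<in> U} \<in> p)"

lemma ulim_ex1: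
  fixes f :: "'a \<Rightarrow> 'x::t2_space"
  assumes cpt: "compact (UNIV :: 'x set)" and p: "is_ultrafilter p"
  shows "\<exists>!z. \<forall>U. open U \<and> z \<in> U \<longrightarrow> {s. f s \<in> U} \<in> p"
proof (rule ex_ex1I)
  show "\<exists>z. \<forall>U. open U \<and> z \<in> U \<longrightarrow> {s. f s \<in> U} \<in> p"
  proof (rule ccontr)
    assume "\<not> ?thesis"
    then have "\<forall>z. \<exists>U. open U \<and> z \<in> U \<and> {s. f s \<in> U} \<notin> p" by blast
    then have "\<exists>Uf. \<forall>z. open (Uf z) \<and> z \<in> Uf z \<and> {s. f s \<in> Uf z} \<notin> p" by (rule choice)
    then obtain Uf where Uf: "\<And>z. open (Uf z) \<and> z \<in> Uf z \<and> {s. f s \<in> Uf z} \<notin> p" by blast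
    have h1: "UNIV \<subseteq> \<Union>(range Uf)" using Uf by blast
    have h2: "\<And>B. B \<in> range Uf \<Longrightarrow> open B" using Uf by blast
    obtain T' where T': "T' \<subseteq> range Uf" "finite T'" "UNIV \<subseteq> \<Union>T'"
      by (rule compactE[OF cpt h1 h2])
    define V where "V = (\<lambda>W. {s. f s \<in> W}) ` T'"
    have "finite V" unfolding V_def using T'(2) by blast
    moreover have "\<forall>v\<in>V. v \<notin> p"
    proof
      fix v assume "v \<in> V"
      then obtain W where "W \<in> T'" "v = {s. f s \<in> W}" unfolding V_def by blast
      moreover obtain z where "W = Uf z" using \<open>W \<in> T'\<close> T'(1) by blast
      ultimately show "v \<notin> p" using Uf by blast
    qed
    ultimately have "\<Union>V \<notin> p" using uf_Union_fin[OF _ p] by blast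
    moreover have "\<Union>V = UNIV"
    proof -
      have "s \<in> \<Union>V" for s
      proof -
        obtain W where "W \<in> T'" "f s \<in> W" using T'(3) by blast
        then show ?thesis unfolding V_def by blast
      qed
      then show ?thesis by blast
    qed
    ultimately have "UNIV \<notin> p" by simp
    then show False using filterD(1)[OF uf_filter[OF p]] by blast
  qed
next
  fix z1 z2
  assume z1: "\<forall>U. open U \<and> z1 \<in> U \<longrightarrow> {s. f s \<in> U} \<in> p"
    and z2: "\<forall>U. open U \<and> z2 \<in> U \<longrightarrow> {s. f s \<in> U} \<in> p"
  show "z1 = z2"
  proof (rule ccontr)
    assume "z1 \<noteq> z2"
    then obtain U V where UV: "open U" "open V" "z1 \<in> U" "z2 \<in> V" "U \<inter> V = {}"
      using hausdorff[of z1 z2] by blast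
    have h1: "{s. f s \<in> U} \<in> p" using z1 UV(1,3) by blast
    have h2: "{s. f s \<in> V} \<in> p" using z2 UV(2,4) by blast
    have "{s. f s \<in> U} \<inter> {s. f s \<in> V} \<in> p" by (rule uf_Int[OF p h1 h2])
    moreover have "{s. f s \<in> U} \<inter> {s. f s \<in> V} = {}" using UV(5) by blast
    ultimately have "{} \<in> p" by simp
    then show False using uf_ne[OF p] by blast
  qed
qed

lemma ulimI:
  fixes f :: "'a \<Rightarrow> 'x::t2_space"
  assumes "compact (UNIV :: 'x set)" "is_ultrafilter p" "open U" "ulim p f \<in> U"
  shows "{s. f s \<in> U} \<in> p"
proof -
  have "\<forall>U. open U \<and> ulim p f \<in> U \<longrightarrow> {s. f s \<in> U} \<in> p"
    unfolding ulim_def by (rule theI'[OF ulim_ex1[OF assms(1,2)]])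
  then show ?thesis using assms(3,4) by blast
qed

lemma ulim_eq:
  fixes f :: "'a \<Rightarrow> 'x::t2_space"
  assumes "compact (UNIV :: 'x set)" "is_ultrafilter p"
    "\<forall>U. open U \<and> z \<in> U \<longrightarrow> {s. f s \<in> U} \<in> p"
  shows "ulim p f = z"
  unfolding ulim_def by (rule the1_equality[OF ulim_ex1[OF assms(1,2)] assms(3)])

theorem lemma12:
  fixes \<F> :: "'a::semigroup_mult set set"
    and T :: "'a \<Rightarrow> 'x::t2_space \<Rightarrow> 'x"
    and x :: 'x
  assumes "is_filter \<F>"
    and "subsemigroup_betaS (filter_closure \<F>)"
    and "dyn_system T"
  shows "\<forall>F\<in>\<F>. \<exists>y \<in> closure {T s x | s. s \<in> F}.
           F_unif_recurrent \<F> T y \<and> F_proximal \<F> T x y"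
proof -
  interpret bsetting \<F> using assms(1,2) by unfold_locales
  have cpt: "compact (UNIV :: 'x set)" using assms(3) unfolding dyn_system_def by blast
  have opv: "open (T s -` U)" if "open U" for s U
  proof -
    have "continuous_on UNIV (T s)" using assms(3) unfolding dyn_system_def by blast
    then have "open (T s -` U \<inter> UNIV)" using continuous_on_open_vimage[of UNIV "T s"] that by blast
    then show ?thesis by simp
  qed
  have comp: "T s (T t z) = T (s * t) z" for s t z
  proof -
    have "T s \<circ> T t = T (s * t)" using assms(3) unfolding dyn_system_def by blast
    then show ?thesis by (metis comp_apply)
  qed
  define Tp where "Tp q z = ulim q (\<lambda>s. T s z)" for q z
  have TpI: "{s. T s z \<in> U} \<in> q" if "q \<in> PP" "open U" "Tp q z \<in> U" for q z U
    using ulimI[OF cpt P_uf[OF that(1)] that(2)] that(3) unfolding Tp_def by blast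
  have Tp_mult: "Tp (ult_mult q r) z = Tp q (Tp r z)" if qr: "q \<in> PP" "r \<in> PP" for q r z
  proof -
    define w where "w = Tp r z"
    define v where "v = Tp q w"
    have "\<forall>U. open U \<and> v \<in> U \<longrightarrow> {u. T u z \<in> U} \<in> ult_mult q r"
    proof (intro allI impI)
      fix U assume U: "open U \<and> v \<in> U"
      have h1: "{s. T s w \<in> U} \<in> q" using TpI[OF qr(1)] U unfolding v_def by blast
      have "{s. T s w \<in> U} \<subseteq> {s. lpre s {u. T u z \<in> U} \<in> r}"
      proof
        fix s assume "s \<in> {s. T s w \<in> U}"
        then have "w \<in> T s -` U" by simp
        then have "{t. T t z \<in> T s -` U} \<in> r" using TpI[OF qr(2) opv] U unfolding w_def by blast
        moreover have "{t. T t z \<in> T s -` U} = lpre s {u. T u z \<in> U}"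
          unfolding lpre_def by (simp add: comp)
        ultimately show "s \<in> {s. lpre s {u. T u z \<in> U} \<in> r}" by simp
      qed
      then have "{s. lpre s {u. T u z \<in> U} \<in> r} \<in> q" using uf_mono[OF P_uf[OF qr(1)] h1] by blast
      then show "{u. T u z \<in> U} \<in> ult_mult q r" using mult_mem by blast
    qed
    then have "ulim (ult_mult q r) (\<lambda>u. T u z) = v"
      by (rule ulim_eq[OF cpt P_uf[OF P_mult[OF qr]]])
    then show ?thesis unfolding Tp_def v_def w_def by simp
  qed
  obtain p where p: "p \<in> PP" "ult_mult p p = p" and pmin: "\<forall>q\<in>PP. \<exists>r\<in>PP. ult_mult r (ult_mult q p) = p"
    using key by blast
  define y where "y = Tp p x"
  have yy: "Tp p y = y" unfolding y_def using Tp_mult[OF p(1) p(1), of x] p(2) by simp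
  show ?thesis
  proof (intro ballI bexI conjI)
    fix F assume F: "F \<in> \<F>"
    have Fp: "F \<in> p" using P_FF[OF p(1)] F by blast
    show "y \<in> closure {T s x | s. s \<in> F}"
      unfolding closure_iff_nhds_not_empty
    proof (intro allI impI)
      fix A S assume S: "S \<subseteq> A" "open S" "y \<in> S"
      have "{s. T s x \<in> S} \<in> p" using TpI[OF p(1) S(2)] S(3) unfolding y_def by blast
      then have "{s. T s x \<in> S} \<inter> F \<in> p" using uf_Int[OF P_uf[OF p(1)] _ Fp] by blast
      then obtain s where "s \<in> F" "T s x \<in> S" using uf_ne[OF P_uf[OF p(1)]] by blast
      then show "{T s x | s. s \<in> F} \<inter> A \<noteq> {}" using S(1) by blast
    qed
    show "F_proximal \<F> T x y"
      unfolding F_proximal_def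
    proof (intro allI impI ballI)
      fix U :: "('x \<times> 'x) set" and F' assume U: "\<exists>V. open V \<and> (\<forall>z. (z, z) \<in> V) \<and> V \<subseteq> U" and F': "F' \<in> \<F>"
      then obtain V where V: "open V" "(y, y) \<in> V" "V \<subseteq> U" by blast
      then obtain A B where AB: "open A" "open B" "(y, y) \<in> A \<times> B" "A \<times> B \<subseteq> V"
        using open_prod_elim[OF V(1) V(2)] by metis
      have h1: "{s. T s x \<in> A} \<in> p" using TpI[OF p(1) AB(1)] AB(3) unfolding y_def by simp
      have h2: "{s. T s y \<in> B} \<in> p" using TpI[OF p(1) AB(2)] AB(3) yy by simp
      have F'p: "F' \<in> p" using P_FF[OF p(1)] F' by blast
      have "{s. T s x \<in> A} \<inter> {s. T s y \<in> B} \<inter> F' \<in> p"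
        using uf_Int[OF P_uf[OF p(1)] uf_Int[OF P_uf[OF p(1)] h1 h2] F'p] .
      then obtain s where "s \<in> F'" "T s x \<in> A" "T s y \<in> B" using uf_ne[OF P_uf[OF p(1)]] by blast
      then show "\<exists>s\<in>F'. (T s x, T s y) \<in> U" using AB(4) V(3) by blast
    qed
    show "F_unif_recurrent \<F> T y"
      unfolding F_unif_recurrent_def F_syndetic_def
    proof (intro allI impI ballI)
      fix U :: "'x set" and F' assume U: "open U \<and> y \<in> U" and F': "F' \<in> \<F>"
      define A where "A = {s. T s y \<in> U}"
      have claim: "\<exists>t\<in>F'. lpre t A \<in> q" if q: "q \<in> PP" for q
      proof -
        obtain r where r: "r \<in> PP" "ult_mult r (ult_mult q p) = p" using pmin q by blast
        define z where "z = Tp q y"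
        have "Tp r z = Tp (ult_mult r (ult_mult q p)) x"
          unfolding z_def y_def using Tp_mult[OF r(1) P_mult[OF q p(1)]] Tp_mult[OF q p(1)] by simp
        then have "Tp r z = y" using r(2) unfolding y_def by simp
        then have "{t. T t z \<in> U} \<in> r" using TpI[OF r(1)] U by blast
        moreover have "F' \<in> r" using P_FF[OF r(1)] F' by blast
        ultimately have "{t. T t z \<in> U} \<inter> F' \<in> r" using uf_Int[OF P_uf[OF r(1)]] by blast
        then obtain t where t: "t \<in> F'" "T t z \<in> U" using uf_ne[OF P_uf[OF r(1)]] by blast
        then have "z \<in> T t -` U" by simp
        then have "{s. T s y \<in> T t -` U} \<in> q" using TpI[OF q opv] U unfolding z_def by blast
        moreover have "{s. T s y \<in> T t -` U} = lpre t A" unfolding lpre_def A_def by (simp add: comp)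
        ultimately show ?thesis using t(1) by auto
      qed
      show "\<exists>G. finite G \<and> G \<subseteq> F' \<and> (\<Union>t\<in>G. lpre t {s. T s y \<in> U}) \<in> \<F>"
      proof (rule ccontr)
        assume nG: "\<not> ?thesis"
        define BB where "BB = {- (\<Union>t\<in>G. lpre t A) | G. finite G \<and> G \<subseteq> F'}"
        have "\<exists>q. is_ultrafilter q \<and> \<F> \<subseteq> q \<and> BB \<subseteq> q"
        proof (rule ultrafilter_extend[OF assms(1)])
          show "BB \<noteq> {}" unfolding BB_def by blast
          show "\<forall>B1\<in>BB. \<forall>B2\<in>BB. \<exists>B3\<in>BB. B3 \<subseteq> B1 \<inter> B2"
          proof (intro ballI)
            fix B1 B2 assume "B1 \<in> BB" "B2 \<in> BB"
            then obtain G1 G2 where G: "finite G1" "G1 \<subseteq> F'" "finite G2" "G2 \<subseteq> F'"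
              "B1 = - (\<Union>t\<in>G1. lpre t A)" "B2 = - (\<Union>t\<in>G2. lpre t A)" unfolding BB_def by blast
            have "- (\<Union>t\<in>G1 \<union> G2. lpre t A) \<in> BB" unfolding BB_def using G(1-4) by blast
            moreover have "- (\<Union>t\<in>G1 \<union> G2. lpre t A) \<subseteq> B1 \<inter> B2" using G(5,6) by blast
            ultimately show "\<exists>B3\<in>BB. B3 \<subseteq> B1 \<inter> B2" by blast
          qed
          show "\<forall>F\<in>\<F>. \<forall>B\<in>BB. F \<inter> B \<noteq> {}"
          proof (intro ballI)
            fix F'' B assume F'': "F'' \<in> \<F>" and "B \<in> BB"
            then obtain G where G: "finite G" "G \<subseteq> F'" "B = - (\<Union>t\<in>G. lpre t A)"
              unfolding BB_def by blast
            show "F'' \<inter> B \<noteq> {}"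
            proof
              assume "F'' \<inter> B = {}"
              then have "F'' \<subseteq> (\<Union>t\<in>G. lpre t A)" using G(3) by blast
              then have "(\<Union>t\<in>G. lpre t A) \<in> \<F>" using filterD(4)[OF assms(1) F''] by blast
              then show False using nG G(1,2) unfolding A_def by blast
            qed
          qed
        qed
        then obtain q where q: "is_ultrafilter q" "\<F> \<subseteq> q" "BB \<subseteq> q" by blast
        then have qP: "q \<in> PP" unfolding filter_closure_def by blast
        obtain t where t: "t \<in> F'" "lpre t A \<in> q" using claim[OF qP] by blast
        have "- (\<Union>t'\<in>{t}. lpre t' A) \<in> BB" unfolding BB_def using t(1) by blast
        then have "- lpre t A \<in> q" using q(3) by auto
        then show False using t(2) uf_compl[OF q(1)] by blast
      qed
    qed
  qed
qed


end
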